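(* Assume that $\kappa_{\mathcal H}(X_i,X_i)<\infty$ almost surely for every $i\in\{1,\dots,n+1\}$, and that for every $y\in\mathcal Y$ the map $u\mapsto\ell(y,u)$ is convex and three times differentiable, $u\mapsto\partial_2\ell(y,u)$ is $\beta_{\ell;2}$-Lipschitz continuous ($\beta_{\ell;2}\in(0,\infty)$), and $\sup_{u\in\mathcal Y}|\partial_2^3\ell(y,u)|\le\xi_\ell$ ($\xi_\ell\in(0,\infty)$). Then $$\big\|\hat f_{\lambda;D^y}-\tilde f^{\mathrm{IF}}_{\lambda;D^y}\big\|_{\mathcal H}\le\sqrt{K_{n+1,n+1}}\min\Big(\frac{\rho^{(2)}_\lambda(y)}{\lambda^3(n+1)^2},\frac{2\rho^{(1)}_\lambda(y)}{\lambda(n+1)}\Big),$$ where $\rho^{(1)}_\lambda(y)=\frac12\big|-\partial_2\ell(z,\hat f_{\lambda;D^z}(X_{n+1}))+\partial_2\ell(y,\hat f_{\lambda;D^z}(X_{n+1}))\big|$, $\tilde\rho^{(1)}_\lambda(y)=\big(1+K_{n+1,n+1}\frac{\beta_{\ell;2}}{\lambda(n+1)}\big)\rho^{(1)}_\lambda(y)$ and $$\rho^{(2)}_\lambda(y)=\frac{\xi_\ell}2\sqrt{K_{n+1,n+1}}\Big(\frac1{n+1}\sum_{i=1}^{n+1}K_{i,i}^{3/2}\Big)\big(\tilde\rho^{(1)}_\lambda(y)\big)^2+2\lambda K_{n+1,n+1}\beta_{\ell;2}\tilde\rho^{(1)}_\lambda(y).$$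
   Context: Let $\mathcal X\subset\mathbb R^d$, $\mathcal Y\subset\mathbb R$, $D=\{(X_1,Y_1),\dots,(X_n,Y_n)\}$ i.i.d., $(X_{n+1},Y_{n+1})$ independent with the same law; $D^{y'}=D\cup\{(X_{n+1},y')\}$. $\mathcal H$ is an RKHS with kernel $\kappa_{\mathcal H}$, $K_x=\kappa_{\mathcal H}(x,\cdot)$, $K=(\kappa_{\mathcal H}(X_i,X_j))_{1\le i,j\le n+1}$, $\mathcal A=\mathrm{span}\{K_{X_1},\dots,K_{X_{n+1}}\}$. For a loss $\ell$ and $\lambda>0$, $\hat f_{\lambda;D^{y'}}$ minimizes $\frac1{n+1}\sum_{(x,y'')\in D^{y'}}\ell(y'',f(x))+\lambda\|f\|_{\mathcal H}^2$ over $\mathcal H$. Fix $z\in\mathcal Y$ and a candidate $y\in\mathcal Y$. Let $\mathbf u=(1,\dots,1,1,0)\in\mathbb R^{n+2}$ and for $f\in\mathcal H$ let $H(f)=\frac1{n+1}\sum_{i=1}^n\partial_2^2\ell(Y_i,f(X_i))K_{X_i}\otimes K_{X_i}+\frac1{n+1}\partial_2^2\ell(z,f(X_{n+1}))K_{X_{n+1}}\otimes K_{X_{n+1}}+2\lambda\mathrm{Id}$ (the second Fréchet differential at $f$ of the $D^z$ regularized risk $\frac1{n+1}\sum_{(x,y'')\in D^z}\ell(y'',f(x))+\lambda\|f\|^2$), with $(g\otimes g)h=\langle g,h\rangle_{\mathcal H}g$, and $H(f)^+$ the inverse of its restriction to $\mathcal A$. For $z'\in\mathcal Y$, $\mathbf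 I_{\hat f}(X_{n+1},z')=-\frac1{n+1}\partial_2\ell(z',\hat f_{\lambda;D^z}(X_{n+1}))H(\hat f_{\lambda;D^z})^+K_{X_{n+1}}$, and the influence-function-based approximation is $\tilde f^{\mathrm{IF}}_{\lambda;D^y}=\hat f_{\lambda;D^z}-\mathbf I_{\hat f}(X_{n+1},z)+\mathbf I_{\hat f}(X_{n+1},y)$. $\partial_2,\partial_2^2,\partial_2^3$ denote derivatives in the second argument of $\ell$. *)

theory Defs
  imports "HOL-Analysis.Analysis"
begin

text \<open>Abstract RKHS: a real Hilbert space 'h with canonical feature map
  Kf x = K_x; a function f in H is evaluated by the reproducing property
  f(x) = <f, K_x>. Data: X i, Y i for i = 1..n; test point X (n+1).\<close>

definition ev :: "('x \<Rightarrow> 'h::real_inner) \<Rightarrow> 'h \<Rightarrow> 'x \<Rightarrow> real" where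
  "ev Kf f x = inner f (Kf x)"

definition kmat :: "('x \<Rightarrow> 'h::real_inner) \<Rightarrow> (nat \<Rightarrow> 'x) \<Rightarrow> nat \<Rightarrow> nat \<Rightarrow> real" where
  "kmat Kf X i j = inner (Kf (X i)) (Kf (X j))"

text \<open>Regularized empirical risk on D^{y'} = D \<union> {(X_{n+1}, y')}.\<close>
definition risk :: "(real \<Rightarrow> real \<Rightarrow> real) \<Rightarrow> real \<Rightarrow> ('x \<Rightarrow> 'h::real_inner)
    \<Rightarrow> (nat \<Rightarrow> 'x) \<Rightarrow> (nat \<Rightarrow> real) \<Rightarrow> nat \<Rightarrow> real \<Rightarrow> 'h \<Rightarrow> real" where
  "risk loss lam Kf X Y n y' f =
     (1 / real (n + 1)) * ((\<Sum>i=1..n. loss (Y i) (ev Kf f (X i))) + loss y' (ev Kf f (X (n + 1))))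
     + lam * (norm f)\<^sup>2"

definition Aspan :: "('x \<Rightarrow> 'h::real_inner) \<Rightarrow> (nat \<Rightarrow> 'x) \<Rightarrow> nat \<Rightarrow> 'h set" where
  "Aspan Kf X n = span ((\<lambda>i. Kf (X i)) ` {1..n + 1})"

text \<open>H(f): second Frechet differential of the D^z regularized risk at f,
  with d2 the second derivative of the loss in its second argument.\<close>
definition hess :: "(real \<Rightarrow> real \<Rightarrow> real) \<Rightarrow> real \<Rightarrow> ('x \<Rightarrow> 'h::real_inner)
    \<Rightarrow> (nat \<Rightarrow> 'x) \<Rightarrow> (nat \<Rightarrow> real) \<Rightarrow> nat \<Rightarrow> real \<Rightarrow> 'h \<Rightarrow> 'h \<Rightarrow> 'h" where
  "hess d2 lam Kf X Y n z f h =
     (1 / real (n + 1)) *\<^sub>R (\<Sum>i=1..n. (d2 (Y i) (ev Kf f (X i)) * inner (Kf (X i)) h) *\<^sub>R Kf (X i))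
     + (1 / real (n + 1)) *\<^sub>R ((d2 z (ev Kf f (X (n + 1))) * inner (Kf (X (n + 1))) h) *\<^sub>R Kf (X (n + 1)))
     + (2 * lam) *\<^sub>R h"

definition hess_pinv :: "(real \<Rightarrow> real \<Rightarrow> real) \<Rightarrow> real \<Rightarrow> ('x \<Rightarrow> 'h::real_inner)
    \<Rightarrow> (nat \<Rightarrow> 'x) \<Rightarrow> (nat \<Rightarrow> real) \<Rightarrow> nat \<Rightarrow> real \<Rightarrow> 'h \<Rightarrow> 'h \<Rightarrow> 'h" where
  "hess_pinv d2 lam Kf X Y n z f v =
     (THE a. a \<in> Aspan Kf X n \<and> hess d2 lam Kf X Y n z f a = v)"

text \<open>Influence function I_fhat(X_{n+1}, z'), with fz = fhat_{lambda;D^z}.\<close>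
definition infl :: "(real \<Rightarrow> real \<Rightarrow> real) \<Rightarrow> (real \<Rightarrow> real \<Rightarrow> real) \<Rightarrow> real
    \<Rightarrow> ('x \<Rightarrow> 'h::real_inner) \<Rightarrow> (nat \<Rightarrow> 'x) \<Rightarrow> (nat \<Rightarrow> real) \<Rightarrow> nat \<Rightarrow> real
    \<Rightarrow> 'h \<Rightarrow> real \<Rightarrow> 'h" where
  "infl d1 d2 lam Kf X Y n z fz z' =
     - ((1 / real (n + 1)) * d1 z' (ev Kf fz (X (n + 1))))
       *\<^sub>R hess_pinv d2 lam Kf X Y n z fz (Kf (X (n + 1)))"

definition f_IF :: "(real \<Rightarrow> real \<Rightarrow> real) \<Rightarrow> (real \<Rightarrow> real \<Rightarrow> real) \<Rightarrow> real
    \<Rightarrow> ('x \<Rightarrow> 'h::real_inner) \<Rightarrow> (nat \<Rightarrow> 'x) \<Rightarrow> (nat \<Rightarrow> real) \<Rightarrow> nat \<Rightarrow> real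
    \<Rightarrow> 'h \<Rightarrow> real \<Rightarrow> 'h" where
  "f_IF d1 d2 lam Kf X Y n z fz y =
     fz - infl d1 d2 lam Kf X Y n z fz z + infl d1 d2 lam Kf X Y n z fz y"

end

theory Submission
  imports Defs "HOL-Analysis.Analysis"
begin

lemma deriv_mono_convex:
  fixes f g :: "real \<Rightarrow> real"
  assumes cv: "convex_on UNIV f" and d: "\<And>u. (f has_real_derivative g u) (at u)"
    and ab: "a \<le> b"
  shows "g a \<le> g b"
proof -
  have t1: "g a * (b - a) \<le> f b - f a"
    using convex_on_imp_above_tangent[OF cv, of a b "g a"] d[of a] by simp
  have t2: "g b * (a - b) \<le> f a - f b"
    using convex_on_imp_above_tangent[OF cv, of b a "g b"] d[of b] by simp
  have "(g a - g b) * (b - a) \<le> 0" using t1 t2 by (simp add: algebra_simps)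
  then show ?thesis using ab
    by (cases "a = b") (auto simp: mult_le_0_iff)
qed

lemma mono_deriv_nonneg:
  fixes g h :: "real \<Rightarrow> real"
  assumes mono: "\<And>a b. a \<le> b \<Longrightarrow> g a \<le> g b" and d: "(g has_real_derivative h u) (at u)"
  shows "h u \<ge> 0"
proof (rule ccontr)
  assume "\<not> h u \<ge> 0"
  then have "h u < 0" by simp
  from DERIV_neg_dec_right[OF d this] obtain d where "d > 0" "\<forall>t>0. t < d \<longrightarrow> g (u + t) < g u"
    by blast
  then have "g (u + d/2) < g u" by simp
  moreover have "g u \<le> g (u + d/2)" using mono \<open>d > 0\<close> by simp
  ultimately show False by simp
qed

lemma mvt_abs:
  fixes f f' :: "real \<Rightarrow> real"
  assumes d: "\<And>x. (f has_real_derivative f' x) (at x)"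
  shows "\<exists>c. f a - f b = (a - b) * f' c \<and> \<bar>c - b\<bar> \<le> \<bar>a - b\<bar>"
proof (cases a b rule: linorder_cases)
  case less
  from MVT2[OF less, of f f'] d obtain c where "c > a" "c < b" "f b - f a = (b - a) * f' c" by blast
  then show ?thesis by (intro exI[of _ c]) (auto simp: algebra_simps)
next
  case equal then show ?thesis by auto
next
  case greater
  from MVT2[OF greater, of f f'] d obtain c where "c > b" "c < a" "f a - f b = (a - b) * f' c" by blast
  then show ?thesis by (intro exI[of _ c]) (auto simp: algebra_simps)
qed

lemma taylor2_bound:
  fixes g h k :: "real \<Rightarrow> real"
  assumes dg: "\<And>u. (g has_real_derivative h u) (at u)"
    and dh: "\<And>u. (h has_real_derivative k u) (at u)"
    and kb: "\<And>u. \<bar>k u\<bar> \<le> \<xi>"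
  shows "\<bar>g a - g b - h b * (a - b)\<bar> \<le> \<xi> * (a - b)\<^sup>2"
proof -
  have hl: "\<bar>h s - h t\<bar> \<le> \<xi> * \<bar>s - t\<bar>" for s t
  proof -
    obtain c where "h s - h t = (s - t) * k c" using mvt_abs[OF dh] by blast
    then have "\<bar>h s - h t\<bar> = \<bar>s - t\<bar> * \<bar>k c\<bar>" by (simp add: abs_mult)
    also have "\<dots> \<le> \<bar>s - t\<bar> * \<xi>" using kb by (intro mult_left_mono) auto
    finally show ?thesis by (simp add: mult.commute)
  qed
  have dphi: "((\<lambda>t. g t - h b * t) has_real_derivative (h t - h b)) (at t)" for t
    using dg[of t] by (auto intro!: derivative_eq_intros)
  obtain c where c: "(g a - h b * a) - (g b - h b * b) = (a - b) * (h c - h b)" "\<bar>c - b\<bar> \<le> \<bar>a - b\<bar>"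
    using mvt_abs[OF dphi, of a b] by blast
  have "\<bar>g a - g b - h b * (a - b)\<bar> = \<bar>a - b\<bar> * \<bar>h c - h b\<bar>"
    using c(1) by (simp add: abs_mult[symmetric] algebra_simps)
  also have "\<dots> \<le> \<bar>a - b\<bar> * (\<xi> * \<bar>a - b\<bar>)"
    using hl[of c b] mult_left_mono[OF c(2), of \<xi>] kb[of 0] by (intro mult_left_mono) (auto, linarith)
  also have "\<dots> = \<xi> * (a - b)\<^sup>2" by (simp add: power2_eq_square abs_mult_self)
  finally show ?thesis .
qed

definition grad :: "(real \<Rightarrow> real \<Rightarrow> real) \<Rightarrow> real \<Rightarrow> ('x \<Rightarrow> 'h::real_inner)
    \<Rightarrow> (nat \<Rightarrow> 'x) \<Rightarrow> (nat \<Rightarrow> real) \<Rightarrow> nat \<Rightarrow> real \<Rightarrow> 'h \<Rightarrow> 'h" where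
  "grad d1 lam Kf X Y n w f =
     (1 / real (n + 1)) *\<^sub>R ((\<Sum>i=1..n. d1 (Y i) (ev Kf f (X i)) *\<^sub>R Kf (X i))
        + d1 w (ev Kf f (X (n + 1))) *\<^sub>R Kf (X (n + 1))) + (2 * lam) *\<^sub>R f"

lemma ev_add_scale: "ev Kf (f + t *\<^sub>R h) x = ev Kf f x + t * ev Kf h x"
  by (simp add: ev_def inner_add_left)

lemma risk_line:
  "risk loss lam Kf X Y n w (f + t *\<^sub>R h) =
     (1 / real (n + 1)) * ((\<Sum>i=1..n. loss (Y i) (ev Kf f (X i) + t * ev Kf h (X i)))
        + loss w (ev Kf f (X (n + 1)) + t * ev Kf h (X (n + 1))))
     + lam * (inner f f + 2 * t * inner f h + t\<^sup>2 * inner h h)"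
proof -
  have "(norm (f + t *\<^sub>R h))\<^sup>2 = inner f f + 2 * t * inner f h + t\<^sup>2 * inner h h"
    by (simp only: power2_norm_eq_inner) (simp add: inner_add_left inner_add_right inner_commute power2_eq_square algebra_simps)
  then show ?thesis by (simp add: risk_def ev_add_scale)
qed

lemma grad_zero:
  fixes Kf :: "'x \<Rightarrow> 'h::real_inner"
  assumes d: "\<And>i u. i \<in> {1..n} \<Longrightarrow> (loss (Y i) has_real_derivative d1 (Y i) u) (at u)"
    and dw: "\<And>u. (loss w has_real_derivative d1 w u) (at u)"
    and fmin: "\<forall>g. risk loss lam Kf X Y n w f \<le> risk loss lam Kf X Y n w g"
  shows "grad d1 lam Kf X Y n w f = 0"
proof -
  define h where "h = grad d1 lam Kf X Y n w f"
  define N where "N = real (n + 1)"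
  have chain: "((\<lambda>t. l (a + t * b)) has_real_derivative l' a * b) (at 0)"
    if "\<And>u. (l has_real_derivative l' u) (at u)" for l l' :: "real \<Rightarrow> real" and a b :: real
  proof -
    have "((\<lambda>t. a + t * b) has_real_derivative b) (at 0)"
      by (auto intro!: derivative_eq_intros)
    from DERIV_chain2[OF _ this, of l "l' a"] that show ?thesis by simp
  qed
  have D: "((\<lambda>t. risk loss lam Kf X Y n w (f + t *\<^sub>R h)) has_real_derivative
      (1 / N) * ((\<Sum>i=1..n. d1 (Y i) (ev Kf f (X i)) * ev Kf h (X i))
        + d1 w (ev Kf f (X (n + 1))) * ev Kf h (X (n + 1)))
      + lam * (2 * inner f h)) (at 0)"
    unfolding risk_line N_def
    by (rule derivative_eq_intros chain d dw DERIV_sum refl | simp)+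
  have val: "(1 / N) * ((\<Sum>i=1..n. d1 (Y i) (ev Kf f (X i)) * ev Kf h (X i))
        + d1 w (ev Kf f (X (n + 1))) * ev Kf h (X (n + 1)))
      + lam * (2 * inner f h) = inner h h"
    by (simp add: h_def[symmetric, of] h_def grad_def N_def ev_def inner_add_left inner_sum_left inner_commute)
  have "inner h h = 0"
    using DERIV_local_min[OF D, of 1] fmin val by simp
  then show ?thesis by (simp add: h_def)
qed

lemma surj_span:
  fixes H :: "'h::real_vector \<Rightarrow> 'h"
  assumes fin: "finite B0" and lin: "linear H" and inj: "\<And>x. H x = 0 \<Longrightarrow> x = 0"
    and inv: "H ` span B0 \<subseteq> span B0"
  shows "span B0 \<subseteq> H ` span B0"
proof -
  obtain B where B: "B \<subseteq> B0" "independent B" "B0 \<subseteq> span B"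
    using maximal_independent_subset[of B0] by blast
  have sp1: "span B \<subseteq> span B0" by (rule span_mono[OF B(1)])
  have sp2: "span B0 \<subseteq> span B" by (rule span_minimal[OF B(3) subspace_span])
  have spB: "span B = span B0" using sp1 sp2 by (rule subset_antisym)
  have finB: "finite B" using B(1) fin by (rule finite_subset)
  have injH: "inj H"
  proof (rule injI)
    fix x y assume "H x = H y"
    then have "H (x - y) = 0" by (simp add: linear_diff[OF lin])
    then have "x - y = 0" by (rule inj)
    then show "x = y" by simp
  qed
  have indH: "independent (H ` B)"
    using linear_independent_injective_image[OF lin B(2)] inj_on_subset[OF injH subset_UNIV] by blast
  have cardH: "card (H ` B) = card B"
    using card_image[OF inj_on_subset[OF injH subset_UNIV]] by blast
  have HB: "H ` B \<subseteq> span B"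
  proof
    fix x assume "x \<in> H ` B"
    then obtain b where "b \<in> B" "x = H b" by blast
    then have "b \<in> span B0" using B(1) span_base by blast
    then have "x \<in> span B0" using inv \<open>x = H b\<close> by blast
    then show "x \<in> span B" using spB by simp
  qed
  have "span B \<subseteq> span (H ` B)"
  proof
    fix a assume a: "a \<in> span B"
    show "a \<in> span (H ` B)"
    proof (rule ccontr)
      assume na: "a \<notin> span (H ` B)"
      have nb: "a \<notin> H ` B" using na span_base[of a "H ` B"] by (rule contrapos_nn)
      have ind2: "independent (insert a (H ` B))"
        using indH na nb by (simp add: independent_insert)
      have sub: "insert a (H ` B) \<subseteq> span B" using a HB by blast
      have "card (insert a (H ` B)) \<le> card B"
        using independent_span_bound[OF finB ind2 sub] by (rule conjunct2)
      moreover have "finite (H ` B)" using finB by simp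
      ultimately show False using cardH card_insert_disjoint[OF _ nb] by simp
    qed
  qed
  then show ?thesis using spB span_linear_image[OF lin, of B] by simp
qed

lemma hess_linear: "linear (hess d2 lam Kf X Y n z f)"
  unfolding linear_iff
  by (simp add: hess_def inner_add_right scaleR_add_right scaleR_add_left distrib_left
        sum.distrib scaleR_sum_right algebra_simps)

lemma hess_inner:
  "inner (hess d2 lam Kf X Y n z f a) a =
     (1 / real (n + 1)) * ((\<Sum>i=1..n. d2 (Y i) (ev Kf f (X i)) * (inner (Kf (X i)) a)\<^sup>2)
       + d2 z (ev Kf f (X (n + 1))) * (inner (Kf (X (n + 1))) a)\<^sup>2) + 2 * lam * (norm a)\<^sup>2"
  by (simp only: power2_norm_eq_inner)
    (simp add: hess_def inner_add_left inner_sum_left inner_sum_right power2_eq_square inner_commute algebra_simps)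

lemma hess_coercive:
  assumes lam: "lam > 0"
    and nn: "\<And>i. i \<in> {1..n} \<Longrightarrow> d2 (Y i) (ev Kf f (X i)) \<ge> 0"
    and nz: "d2 z (ev Kf f (X (n + 1))) \<ge> 0"
  shows "2 * lam * norm a \<le> norm (hess d2 lam Kf X Y n z f a)"
proof -
  have "0 \<le> (\<Sum>i=1..n. d2 (Y i) (ev Kf f (X i)) * (inner (Kf (X i)) a)\<^sup>2)
       + d2 z (ev Kf f (X (n + 1))) * (inner (Kf (X (n + 1))) a)\<^sup>2"
    using nn nz by (intro add_nonneg_nonneg sum_nonneg mult_nonneg_nonneg) auto
  then have "2 * lam * (norm a)\<^sup>2 \<le> inner (hess d2 lam Kf X Y n z f a) a"
    unfolding hess_inner by simp
  also have "\<dots> \<le> norm (hess d2 lam Kf X Y n z f a) * norm a"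
    by (rule norm_cauchy_schwarz)
  finally have "2 * lam * norm a * norm a \<le> norm (hess d2 lam Kf X Y n z f a) * norm a"
    by (simp add: power2_eq_square mult.assoc)
  then show ?thesis
    by (cases "norm a = 0") (auto simp: mult_le_cancel_right)
qed

lemma hess_span:
  "hess d2 lam Kf X Y n z f a - (2 * lam) *\<^sub>R a \<in> Aspan Kf X n"
proof -
  have "hess d2 lam Kf X Y n z f a - (2 * lam) *\<^sub>R a =
    (1 / real (n + 1)) *\<^sub>R (\<Sum>i=1..n. (d2 (Y i) (ev Kf f (X i)) * inner (Kf (X i)) a) *\<^sub>R Kf (X i))
     + (1 / real (n + 1)) *\<^sub>R ((d2 z (ev Kf f (X (n + 1))) * inner (Kf (X (n + 1))) a) *\<^sub>R Kf (X (n + 1)))"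
    by (simp add: hess_def)
  also have "\<dots> \<in> Aspan Kf X n"
    unfolding Aspan_def
    by (intro span_add span_scale span_sum; rule span_base; auto)
  finally show ?thesis .
qed

lemma pinv_prop:
  assumes lam: "lam > 0"
    and nn: "\<And>i. i \<in> {1..n} \<Longrightarrow> d2 (Y i) (ev Kf f (X i)) \<ge> 0"
    and nz: "d2 z (ev Kf f (X (n + 1))) \<ge> 0"
    and v: "v \<in> Aspan Kf X n"
  shows "hess_pinv d2 lam Kf X Y n z f v \<in> Aspan Kf X n \<and>
         hess d2 lam Kf X Y n z f (hess_pinv d2 lam Kf X Y n z f v) = v"
proof -
  let ?H = "hess d2 lam Kf X Y n z f"
  have lin: "linear ?H" by (rule hess_linear)
  have inj0: "x = 0" if "?H x = 0" for x
  proof -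
    have "2 * lam * norm x \<le> norm (?H x)"
      by (rule hess_coercive[OF lam]) (use nn nz in auto)
    then show ?thesis using that lam by (auto simp: mult_le_0_iff)
  qed
  have inv: "?H ` Aspan Kf X n \<subseteq> Aspan Kf X n"
  proof
    fix b assume "b \<in> ?H ` Aspan Kf X n"
    then obtain a where a: "a \<in> Aspan Kf X n" "b = ?H a" by blast
    have "?H a - (2 * lam) *\<^sub>R a + (2 * lam) *\<^sub>R a \<in> Aspan Kf X n"
      using hess_span a(1) unfolding Aspan_def by (intro span_add span_scale) auto
    then show "b \<in> Aspan Kf X n" using a by simp
  qed
  have "v \<in> ?H ` Aspan Kf X n"
    using surj_span[of "(\<lambda>i. Kf (X i)) ` {1..n + 1}" ?H] lin inj0 inv v
    unfolding Aspan_def by blast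
  then obtain a where a: "a \<in> Aspan Kf X n" "?H a = v" by blast
  have uniq: "b = a" if "b \<in> Aspan Kf X n" "?H b = v" for b
  proof -
    have "?H (b - a) = 0" using that a linear_diff[OF lin] by simp
    then have "b - a = 0" by (rule inj0)
    then show ?thesis by simp
  qed
  have "(THE a. a \<in> Aspan Kf X n \<and> ?H a = v) = a"
    using a uniq by blast
  then show ?thesis using a unfolding hess_pinv_def by simp
qed
lemma ev_diff: "ev Kf (f - g) x = ev Kf f x - ev Kf g x"
  by (simp add: ev_def inner_diff_left)

lemma grad_diff_vec:
  "grad d1 lam Kf X Y n w f - grad d1 lam Kf X Y n w g =
   (1 / real (n + 1)) *\<^sub>R ((\<Sum>i=1..n. (d1 (Y i) (ev Kf f (X i)) - d1 (Y i) (ev Kf g (X i))) *\<^sub>R Kf (X i))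
     + (d1 w (ev Kf f (X (n + 1))) - d1 w (ev Kf g (X (n + 1)))) *\<^sub>R Kf (X (n + 1)))
   + (2 * lam) *\<^sub>R (f - g)"
  by (simp add: grad_def scaleR_diff_left sum_subtractf algebra_simps)

lemma grad_mono_inner:
  "inner (grad d1 lam Kf X Y n w f - grad d1 lam Kf X Y n w g) (f - g) =
   (1 / real (n + 1)) * ((\<Sum>i=1..n. (d1 (Y i) (ev Kf f (X i)) - d1 (Y i) (ev Kf g (X i))) * (ev Kf f (X i) - ev Kf g (X i)))
     + (d1 w (ev Kf f (X (n + 1))) - d1 w (ev Kf g (X (n + 1)))) * (ev Kf f (X (n + 1)) - ev Kf g (X (n + 1))))
   + 2 * lam * (norm (f - g))\<^sup>2"
proof -
  have e: "inner (Kf x) (f - g) = ev Kf f x - ev Kf g x" for x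
    by (simp add: ev_def inner_diff_right inner_commute)
  show ?thesis
    unfolding grad_diff_vec
    by (simp only: power2_norm_eq_inner) (simp add: inner_add_left inner_sum_left e)
qed

lemma grad_taylor:
  "grad d1 lam Kf X Y n w g - grad d1 lam Kf X Y n w f - hess d2 lam Kf X Y n w f (g - f) =
   (1 / real (n + 1)) *\<^sub>R ((\<Sum>i=1..n. (d1 (Y i) (ev Kf g (X i)) - d1 (Y i) (ev Kf f (X i))
        - d2 (Y i) (ev Kf f (X i)) * (ev Kf g (X i) - ev Kf f (X i))) *\<^sub>R Kf (X i))
     + (d1 w (ev Kf g (X (n + 1))) - d1 w (ev Kf f (X (n + 1)))
        - d2 w (ev Kf f (X (n + 1))) * (ev Kf g (X (n + 1)) - ev Kf f (X (n + 1)))) *\<^sub>R Kf (X (n + 1)))"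
proof -
  have e: "inner (Kf x) (g - f) = ev Kf g x - ev Kf f x" for x
    by (simp add: ev_def inner_diff_right inner_commute)
  define A where "A = (\<Sum>i=1..n. (d1 (Y i) (ev Kf g (X i)) - d1 (Y i) (ev Kf f (X i))) *\<^sub>R Kf (X i))"
  define B where "B = (\<Sum>i=1..n. (d2 (Y i) (ev Kf f (X i)) * (ev Kf g (X i) - ev Kf f (X i))) *\<^sub>R Kf (X i))"
  define a where "a = d1 w (ev Kf g (X (n + 1))) - d1 w (ev Kf f (X (n + 1)))"
  define b where "b = d2 w (ev Kf f (X (n + 1))) * (ev Kf g (X (n + 1)) - ev Kf f (X (n + 1)))"
  define c where "c = 1 / real (n + 1)"
  define v where "v = Kf (X (n + 1))"
  have h1: "hess d2 lam Kf X Y n w f (g - f) = c *\<^sub>R B + c *\<^sub>R (b *\<^sub>R v) + (2 * lam) *\<^sub>R (g - f)"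
    by (simp add: hess_def e B_def b_def c_def v_def)
  have h2: "(\<Sum>i=1..n. (d1 (Y i) (ev Kf g (X i)) - d1 (Y i) (ev Kf f (X i))
        - d2 (Y i) (ev Kf f (X i)) * (ev Kf g (X i) - ev Kf f (X i))) *\<^sub>R Kf (X i)) = A - B"
    unfolding A_def B_def by (simp only: scaleR_diff_left sum_subtractf)
  have h3: "grad d1 lam Kf X Y n w g - grad d1 lam Kf X Y n w f = c *\<^sub>R (A + a *\<^sub>R v) + (2 * lam) *\<^sub>R (g - f)"
    unfolding grad_diff_vec A_def a_def c_def v_def ..
  show ?thesis
    unfolding h1 h3 h2 a_def[symmetric] b_def[symmetric] c_def[symmetric] v_def[symmetric]
    by (simp add: algebra_simps)
qed

lemma kmat_powr: "kmat Kf X i i powr (3 / 2) = norm (Kf (X i)) ^ 3"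
proof -
  have k: "kmat Kf X i i = (norm (Kf (X i)))\<^sup>2"
    by (simp add: kmat_def power2_norm_eq_inner)
  show ?thesis
  proof (cases "norm (Kf (X i)) = 0")
    case True then show ?thesis using k by simp
  next
    case False
    then have p: "norm (Kf (X i)) > 0" by simp
    have nn: "(norm (Kf (X i)))\<^sup>2 = norm (Kf (X i)) powr 2"
      using p by (simp add: powr_realpow)
    have "kmat Kf X i i powr (3 / 2) = (norm (Kf (X i)) powr 2) powr (3 / 2)"
      by (simp only: k nn)
    also have "\<dots> = norm (Kf (X i)) powr 3" by (subst powr_powr) simp
    also have "\<dots> = norm (Kf (X i)) ^ 3" using p by (simp add: powr_realpow)
    finally show ?thesis .
  qed
qed

lemma remainder_bound:
  fixes Kf :: "'x \<Rightarrow> 'h::real_inner"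
  assumes r: "\<And>i. i \<in> {1..n+1} \<Longrightarrow> \<bar>r i\<bar> \<le> \<xi> * (ev Kf D (X i))\<^sup>2"
    and xi: "\<xi> \<ge> 0"
  shows "norm ((\<Sum>i=1..n. r i *\<^sub>R Kf (X i)) + r (n + 1) *\<^sub>R Kf (X (n + 1)))
     \<le> \<xi> * (norm D)\<^sup>2 * (\<Sum>i=1..n + 1. kmat Kf X i i powr (3 / 2))"
proof -
  have t: "norm (r i *\<^sub>R Kf (X i)) \<le> \<xi> * (norm D)\<^sup>2 * kmat Kf X i i powr (3 / 2)" if "i \<in> {1..n+1}" for i
  proof -
    have cs: "\<bar>ev Kf D (X i)\<bar> \<le> norm D * norm (Kf (X i))"
      unfolding ev_def by (rule Cauchy_Schwarz_ineq2)
    then have "(ev Kf D (X i))\<^sup>2 \<le> (norm D * norm (Kf (X i)))\<^sup>2"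
      by (metis abs_ge_zero power2_abs power_mono)
    then have "\<bar>r i\<bar> \<le> \<xi> * (norm D * norm (Kf (X i)))\<^sup>2"
      using r[OF that] xi by (meson mult_left_mono order_trans)
    then have "\<bar>r i\<bar> * norm (Kf (X i)) \<le> \<xi> * (norm D * norm (Kf (X i)))\<^sup>2 * norm (Kf (X i))"
      by (rule mult_right_mono) simp
    then show ?thesis
      by (simp add: kmat_powr power2_eq_square power3_eq_cube algebra_simps)
  qed
  have "norm ((\<Sum>i=1..n. r i *\<^sub>R Kf (X i)) + r (n + 1) *\<^sub>R Kf (X (n + 1)))
      = norm (\<Sum>i=1..n+1. r i *\<^sub>R Kf (X i))" by simp
  also have "\<dots> \<le> (\<Sum>i=1..n+1. norm (r i *\<^sub>R Kf (X i)))" by (rule norm_sum)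
  also have "\<dots> \<le> (\<Sum>i=1..n+1. \<xi> * (norm D)\<^sup>2 * kmat Kf X i i powr (3 / 2))"
    by (rule sum_mono) (rule t)
  also have "\<dots> = \<xi> * (norm D)\<^sup>2 * (\<Sum>i=1..n + 1. kmat Kf X i i powr (3 / 2))"
    by (rule sum_distrib_left[symmetric])
  finally show ?thesis .
qed

theorem proposition20:
  fixes loss d1 d2 d3 :: "real \<Rightarrow> real \<Rightarrow> real"
    and Kf :: "'x \<Rightarrow> 'h::{real_inner, complete_space}"
    and \<X> :: "'x set" and \<Y> :: "real set"
    and X :: "nat \<Rightarrow> 'x" and Y :: "nat \<Rightarrow> real"
    and n :: nat and lam \<beta> \<xi> z y :: real and fz fy :: 'h
  assumes n: "n \<ge> 1"
    and X_in: "\<forall>i\<in>{1..n + 1}. X i \<in> \<X>"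
    and Y_in: "\<forall>i\<in>{1..n}. Y i \<in> \<Y>"
    and z_in: "z \<in> \<Y>" and y_in: "y \<in> \<Y>"
    and lam: "lam > 0" and beta: "\<beta> > 0" and xi: "\<xi> > 0"
    and convex: "\<forall>y'\<in>\<Y>. convex_on UNIV (loss y')"
    and deriv1: "\<forall>y'\<in>\<Y>. \<forall>u. (loss y' has_real_derivative d1 y' u) (at u)"
    and deriv2: "\<forall>y'\<in>\<Y>. \<forall>u. (d1 y' has_real_derivative d2 y' u) (at u)"
    and deriv3: "\<forall>y'\<in>\<Y>. \<forall>u. (d2 y' has_real_derivative d3 y' u) (at u)"
    and lip: "\<forall>y'\<in>\<Y>. \<beta>-lipschitz_on UNIV (d1 y')"
    and d3_bound: "\<forall>y'\<in>\<Y>. \<forall>u. \<bar>d3 y' u\<bar> \<le> \<xi>"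
    and fz_min: "\<forall>g. risk loss lam Kf X Y n z fz \<le> risk loss lam Kf X Y n z g"
    and fy_min: "\<forall>g. risk loss lam Kf X Y n y fy \<le> risk loss lam Kf X Y n y g"
  shows
    "let Knn = kmat Kf X (n + 1) (n + 1);
         N = real (n + 1);
         u0 = ev Kf fz (X (n + 1));
         \<rho>1 = (1 / 2) * \<bar>- d1 z u0 + d1 y u0\<bar>;
         \<rho>1t = (1 + Knn * \<beta> / (lam * N)) * \<rho>1;
         \<rho>2 = (\<xi> / 2) * sqrt Knn
                 * ((1 / N) * (\<Sum>i=1..n + 1. (kmat Kf X i i) powr (3 / 2))) * \<rho>1t\<^sup>2
               + 2 * lam * Knn * \<beta> * \<rho>1t
     in norm (fy - f_IF d1 d2 lam Kf X Y n z fz y)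
          \<le> sqrt Knn * min (\<rho>2 / (lam ^ 3 * N\<^sup>2)) (2 * \<rho>1 / (lam * N))"
proof -
  define N where "N = real (n + 1)"
  define v where "v = Kf (X (n + 1))"
  define k where "k = kmat Kf X (n + 1) (n + 1)"
  define s where "s = sqrt k"
  define H where "H = hess d2 lam Kf X Y n z fz"
  define P where "P = hess_pinv d2 lam Kf X Y n z fz v"
  define u0 where "u0 = ev Kf fz (X (n + 1))"
  define u1 where "u1 = ev Kf fy (X (n + 1))"
  define r1 where "r1 = (1 / 2) * \<bar>- d1 z u0 + d1 y u0\<bar>"
  define r1t where "r1t = (1 + k * \<beta> / (lam * N)) * r1"
  define T where "T = (\<Sum>i=1..n + 1. (kmat Kf X i i) powr (3 / 2))"
  define r2 where "r2 = (\<xi> / 2) * s * ((1 / N) * T) * r1t\<^sup>2 + 2 * lam * k * \<beta> * r1t"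
  define del where "del = (1 / N) * (d1 y u0 - d1 z u0)"
  define D where "D = fy - fz"
  define e where "e = fy - f_IF d1 d2 lam Kf X Y n z fz y"
  have Npos: "N > 0" by (simp add: N_def)
  have s_eq: "s = norm v"
    by (simp add: s_def k_def kmat_def v_def norm_eq_sqrt_inner)
  have k_eq: "k = s\<^sup>2"
    by (simp add: s_eq k_def kmat_def v_def power2_norm_eq_inner)
  have s0: "s \<ge> 0" by (simp add: s_eq)
  have k0: "k \<ge> 0" by (simp add: k_eq)
  have r10: "r1 \<ge> 0" by (simp add: r1_def)
  have del_abs: "\<bar>del\<bar> = 2 * r1 / N"
    using Npos by (simp add: del_def r1_def abs_mult)
  have T0: "T \<ge> 0" unfolding T_def by (intro sum_nonneg) simp
  have r1t_ge: "r1 \<le> r1t"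
  proof -
    have "0 \<le> k * \<beta> / (lam * N)" using k0 beta lam Npos by simp
    then have "1 * r1 \<le> (1 + k * \<beta> / (lam * N)) * r1"
      using r10 by (intro mult_right_mono) auto
    then show ?thesis by (simp add: r1t_def)
  qed
  have d1loss: "\<And>w u. w \<in> \<Y> \<Longrightarrow> (loss w has_real_derivative d1 w u) (at u)"
    using deriv1 by blast
  have mono1: "\<And>w a b. w \<in> \<Y> \<Longrightarrow> a \<le> b \<Longrightarrow> d1 w a \<le> d1 w b"
    using deriv_mono_convex convex deriv1 by blast
  have monoprod: "0 \<le> (d1 w a - d1 w b) * (a - b)" if "w \<in> \<Y>" for w a b
  proof (cases "a \<le> b")
    case True
    then show ?thesis using mono1[OF that True] by (simp add: mult_nonpos_nonpos)
  next
    case False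
    then show ?thesis using mono1[OF that, of b a] by simp
  qed
  have d2nn: "\<And>w u. w \<in> \<Y> \<Longrightarrow> 0 \<le> d2 w u"
    using mono_deriv_nonneg mono1 deriv2 by blast
  have lipw: "\<bar>d1 w a - d1 w b\<bar> \<le> \<beta> * \<bar>a - b\<bar>" if "w \<in> \<Y>" for w a b
    using lip that unfolding lipschitz_on_def dist_real_def by blast
  have tay: "\<bar>d1 w a - d1 w b - d2 w b * (a - b)\<bar> \<le> \<xi> * (a - b)\<^sup>2" if "w \<in> \<Y>" for w a b
    using taylor2_bound[of "d1 w" "d2 w" "d3 w" \<xi> a b] deriv2 deriv3 d3_bound that by blast
  have Gz: "grad d1 lam Kf X Y n z fz = 0"
    by (rule grad_zero[where loss=loss]) (use d1loss Y_in z_in fz_min in auto)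
  have Gy: "grad d1 lam Kf X Y n y fy = 0"
    by (rule grad_zero[where loss=loss]) (use d1loss Y_in y_in fy_min in auto)
  have vA: "v \<in> Aspan Kf X n"
    unfolding Aspan_def v_def by (rule span_base) auto
  have Pprop: "P \<in> Aspan Kf X n \<and> H P = v"
    unfolding P_def H_def
    by (rule pinv_prop[OF lam _ _ vA]) (use d2nn Y_in z_in in auto)
  have coer: "2 * lam * norm a \<le> norm (H a)" for a
    unfolding H_def by (rule hess_coercive[OF lam]) (use d2nn Y_in z_in in auto)
  have Pnorm: "norm P \<le> s / (2 * lam)"
  proof -
    have "2 * lam * norm P \<le> s" using coer[of P] Pprop s_eq by simp
    then show ?thesis using lam by (simp add: field_simps)
  qed
  have fIF: "f_IF d1 d2 lam Kf X Y n z fz y = fz - del *\<^sub>R P"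
    by (simp add: f_IF_def infl_def P_def u0_def del_def N_def v_def algebra_simps)
  have e_eq: "e = D + del *\<^sub>R P"
    by (simp add: e_def fIF D_def)
  have gdiff: "grad d1 lam Kf X Y n w f - grad d1 lam Kf X Y n w' f
      = ((1 / N) * (d1 w (ev Kf f (X (n + 1))) - d1 w' (ev Kf f (X (n + 1))))) *\<^sub>R v" for w w' f
    by (simp add: grad_def N_def v_def algebra_simps)
  have Gyfz: "grad d1 lam Kf X Y n y fz = del *\<^sub>R v"
    using gdiff[of y fz z] Gz by (simp add: del_def u0_def)
  have Dbound: "norm D \<le> r1 * s / (lam * N)"
  proof -
    have "2 * lam * (norm D)\<^sup>2 \<le> inner (grad d1 lam Kf X Y n y fy - grad d1 lam Kf X Y n y fz) (fy - fz)"
    proof -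
      have "0 \<le> (1 / real (n + 1)) * ((\<Sum>i=1..n. (d1 (Y i) (ev Kf fy (X i)) - d1 (Y i) (ev Kf fz (X i))) * (ev Kf fy (X i) - ev Kf fz (X i)))
         + (d1 y (ev Kf fy (X (n + 1))) - d1 y (ev Kf fz (X (n + 1)))) * (ev Kf fy (X (n + 1)) - ev Kf fz (X (n + 1))))"
      proof (rule mult_nonneg_nonneg[OF _ add_nonneg_nonneg])
        show "0 \<le> (\<Sum>i=1..n. (d1 (Y i) (ev Kf fy (X i)) - d1 (Y i) (ev Kf fz (X i))) * (ev Kf fy (X i) - ev Kf fz (X i)))"
          by (rule sum_nonneg) (use monoprod Y_in in auto)
        show "0 \<le> (d1 y (ev Kf fy (X (n + 1))) - d1 y (ev Kf fz (X (n + 1)))) * (ev Kf fy (X (n + 1)) - ev Kf fz (X (n + 1)))"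
          by (rule monoprod[OF y_in])
      qed simp
      then show ?thesis unfolding grad_mono_inner D_def by simp
    qed
    also have "\<dots> = - del * inner v D" using Gy Gyfz by (simp add: D_def)
    also have "\<dots> \<le> \<bar>del\<bar> * (s * norm D)"
    proof -
      have "\<bar>inner v D\<bar> \<le> s * norm D" using Cauchy_Schwarz_ineq2[of v D] s_eq by simp
      then have "- del * inner v D \<le> \<bar>del\<bar> * \<bar>inner v D\<bar>"
        by (metis abs_ge_self abs_minus abs_mult minus_mult_left)
      also have "\<dots> \<le> \<bar>del\<bar> * (s * norm D)" using \<open>\<bar>inner v D\<bar> \<le> s * norm D\<close> by (rule mult_left_mono) simp
      finally show ?thesis .
    qed
    finally have "2 * lam * norm D * norm D \<le> (\<bar>del\<bar> * s) * norm D"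
      by (simp add: power2_eq_square algebra_simps)
    then have "2 * lam * norm D \<le> \<bar>del\<bar> * s"
      by (cases "norm D = 0") (use s0 in auto)
    then have "norm D \<le> \<bar>del\<bar> * s / (2 * lam)" using lam by (simp add: field_simps)
    then show ?thesis using del_abs Npos lam by (simp add: field_simps)
  qed
  have D0: "norm D \<ge> 0" by simp
  have b2: "norm e \<le> s * (2 * r1 / (lam * N))"
  proof -
    have "norm e \<le> norm D + \<bar>del\<bar> * norm P"
      unfolding e_eq using norm_triangle_ineq[of D "del *\<^sub>R P"] by simp
    also have "\<dots> \<le> r1 * s / (lam * N) + (2 * r1 / N) * (s / (2 * lam))"
      using Dbound Pnorm del_abs r10 Npos by (intro add_mono mult_mono) auto
    also have "\<dots> = s * (2 * r1 / (lam * N))" using lam Npos by (simp add: field_simps)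
    finally show ?thesis .
  qed
  define R where "R = (\<Sum>i=1..n. (d1 (Y i) (ev Kf fy (X i)) - d1 (Y i) (ev Kf fz (X i))
        - d2 (Y i) (ev Kf fz (X i)) * (ev Kf fy (X i) - ev Kf fz (X i))) *\<^sub>R Kf (X i))
     + (d1 z (ev Kf fy (X (n + 1))) - d1 z (ev Kf fz (X (n + 1)))
        - d2 z (ev Kf fz (X (n + 1))) * (ev Kf fy (X (n + 1)) - ev Kf fz (X (n + 1)))) *\<^sub>R Kf (X (n + 1))"
  have HD: "H D = ((1 / N) * (d1 z u1 - d1 y u1)) *\<^sub>R v - (1 / N) *\<^sub>R R"
  proof -
    have t: "grad d1 lam Kf X Y n z fy - grad d1 lam Kf X Y n z fz - H D = (1 / N) *\<^sub>R R"
      unfolding H_def D_def R_def N_def by (rule grad_taylor)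
    have g: "grad d1 lam Kf X Y n z fy = ((1 / N) * (d1 z u1 - d1 y u1)) *\<^sub>R v"
      using gdiff[of z fy y] Gy by (simp add: u1_def)
    show ?thesis using t g Gz by (simp add: algebra_simps)
  qed
  have linH: "linear H" unfolding H_def by (rule hess_linear)
  have He: "H e = ((1 / N) * ((d1 z u1 - d1 z u0) - (d1 y u1 - d1 y u0))) *\<^sub>R v - (1 / N) *\<^sub>R R"
  proof -
    have "H e = H D + del *\<^sub>R H P" unfolding e_eq using linH by (simp add: linear_add linear_scale)
    also have "\<dots> = ((1 / N) * (d1 z u1 - d1 y u1)) *\<^sub>R v - (1 / N) *\<^sub>R R + del *\<^sub>R v"
      using HD Pprop by simp
    also have "\<dots> = ((1 / N) * ((d1 z u1 - d1 z u0) - (d1 y u1 - d1 y u0))) *\<^sub>R v - (1 / N) *\<^sub>R R"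
      by (simp add: del_def algebra_simps)
    finally show ?thesis .
  qed
  define rr where "rr = (\<lambda>i. d1 (if i = n + 1 then z else Y i) (ev Kf fy (X i)) - d1 (if i = n + 1 then z else Y i) (ev Kf fz (X i))
        - d2 (if i = n + 1 then z else Y i) (ev Kf fz (X i)) * (ev Kf fy (X i) - ev Kf fz (X i)))"
  have R_eq: "R = (\<Sum>i=1..n. rr i *\<^sub>R Kf (X i)) + rr (n + 1) *\<^sub>R Kf (X (n + 1))"
    unfolding R_def rr_def by (intro arg_cong2[where f="(+)"] sum.cong) auto
  have Rb: "norm R \<le> \<xi> * (norm D)\<^sup>2 * T"
    unfolding R_eq T_def
  proof (rule remainder_bound)
    show "\<xi> \<ge> 0" using xi by simp
  next
    fix i assume i: "i \<in> {1..n + 1}"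
    have w: "(if i = n + 1 then z else Y i) \<in> \<Y>" using i Y_in z_in by auto
    show "\<bar>rr i\<bar> \<le> \<xi> * (ev Kf D (X i))\<^sup>2"
      using tay[OF w, of "ev Kf fy (X i)" "ev Kf fz (X i)"] by (simp add: rr_def D_def ev_diff)
  qed
  have u1u0: "\<bar>u1 - u0\<bar> \<le> norm D * s"
  proof -
    have "u1 - u0 = inner D v" by (simp add: u1_def u0_def D_def ev_def v_def inner_diff_left)
    then show ?thesis using Cauchy_Schwarz_ineq2[of D v] s_eq by simp
  qed
  have dd: "\<bar>(d1 z u1 - d1 z u0) - (d1 y u1 - d1 y u0)\<bar> \<le> 2 * \<beta> * (norm D * s)"
  proof -
    have "\<bar>(d1 z u1 - d1 z u0) - (d1 y u1 - d1 y u0)\<bar> \<le> \<bar>d1 z u1 - d1 z u0\<bar> + \<bar>d1 y u1 - d1 y u0\<bar>"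
      by linarith
    also have "\<dots> \<le> \<beta> * \<bar>u1 - u0\<bar> + \<beta> * \<bar>u1 - u0\<bar>"
      using lipw[OF z_in] lipw[OF y_in] by (intro add_mono) auto
    also have "\<dots> \<le> 2 * \<beta> * (norm D * s)" using u1u0 beta by simp
    finally show ?thesis .
  qed
  have HeB: "norm (H e) \<le> (1 / N) * (2 * \<beta> * (norm D * s)) * s + (1 / N) * (\<xi> * (norm D)\<^sup>2 * T)"
  proof -
    have "norm (H e) \<le> norm (((1 / N) * ((d1 z u1 - d1 z u0) - (d1 y u1 - d1 y u0))) *\<^sub>R v) + norm ((1 / N) *\<^sub>R R)"
      unfolding He by (rule norm_triangle_ineq4)
    also have "\<dots> = (1 / N) * \<bar>(d1 z u1 - d1 z u0) - (d1 y u1 - d1 y u0)\<bar> * s + (1 / N) * norm R"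
      using Npos s_eq by (simp add: abs_mult)
    also have "\<dots> \<le> (1 / N) * (2 * \<beta> * (norm D * s)) * s + (1 / N) * (\<xi> * (norm D)\<^sup>2 * T)"
      using dd Rb Npos s0 by (intro add_mono mult_right_mono mult_left_mono) auto
    finally show ?thesis .
  qed
  have eH: "norm e \<le> norm (H e) / (2 * lam)"
    using coer[of e] lam by (simp add: field_simps)
  define Dm where "Dm = r1 * s / (lam * N)"
  have Dm0: "0 \<le> Dm" using r10 s0 lam Npos by (simp add: Dm_def)
  have b1: "norm e \<le> s * (r2 / (lam ^ 3 * N\<^sup>2))"
  proof -
    have "norm e \<le> ((1 / N) * (2 * \<beta> * (norm D * s)) * s + (1 / N) * (\<xi> * (norm D)\<^sup>2 * T)) / (2 * lam)"
      using eH HeB lam by (meson divide_right_mono less_imp_le mult_pos_pos order_trans zero_less_numeral)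
    also have "\<dots> \<le> ((1 / N) * (2 * \<beta> * (Dm * s)) * s + (1 / N) * (\<xi> * Dm\<^sup>2 * T)) / (2 * lam)"
    proof -
      have "norm D \<le> Dm" using Dbound by (simp add: Dm_def)
      moreover have "(norm D)\<^sup>2 \<le> Dm\<^sup>2" using \<open>norm D \<le> Dm\<close> by (intro power_mono) auto
      ultimately show ?thesis
        using lam Npos beta xi s0 T0
        by (intro divide_right_mono add_mono mult_left_mono mult_right_mono) auto
    qed
    also have "\<dots> = \<beta> * s ^ 3 * r1 / (lam\<^sup>2 * N\<^sup>2) + \<xi> * r1\<^sup>2 * s\<^sup>2 * T / (2 * lam ^ 3 * N ^ 3)"
      using lam Npos by (simp add: Dm_def field_simps power2_eq_square power3_eq_cube)
    also have "\<dots> \<le> 2 * \<beta> * s ^ 3 * r1t / (lam\<^sup>2 * N\<^sup>2) + \<xi> * r1t\<^sup>2 * s\<^sup>2 * T / (2 * lam ^ 3 * N ^ 3)"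
    proof (intro add_mono divide_right_mono mult_right_mono mult_left_mono)
      show "\<beta> * s ^ 3 * r1 \<le> 2 * \<beta> * s ^ 3 * r1t"
      proof -
        have a: "s ^ 3 * r1 \<le> s ^ 3 * r1t" using r1t_ge s0 by (intro mult_left_mono) auto
        have b: "0 \<le> s ^ 3 * r1" using s0 r10 by simp
        have c: "s ^ 3 * r1 \<le> 2 * (s ^ 3 * r1t)" using a b by linarith
        have "\<beta> * (s ^ 3 * r1) \<le> \<beta> * (2 * (s ^ 3 * r1t))"
          by (rule mult_left_mono[OF c]) (use beta in simp)
        then show ?thesis by (simp add: algebra_simps)
      qed
      show "r1\<^sup>2 \<le> r1t\<^sup>2" using r1t_ge r10 by (intro power_mono) auto
    qed (use lam Npos xi s0 T0 in auto)
    also have "\<dots> = s * (r2 / (lam ^ 3 * N\<^sup>2))"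
      using lam Npos by (simp add: r2_def k_eq field_simps power2_eq_square power3_eq_cube)
    finally show ?thesis .
  qed
  have main: "norm e \<le> s * min (r2 / (lam ^ 3 * N\<^sup>2)) (2 * r1 / (lam * N))"
    using b1 b2 by (simp add: min_def)
  show ?thesis
    unfolding Let_def
    using main by (simp add: e_def s_def k_def N_def r2_def r1t_def r1_def T_def u0_def)
qed

end
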